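(* The statistics $(2\text{-}31)$ and $(13\text{-}2)$ are constant on every orbit of $\mathfrak{S}_n$ under the modified Foata–Strehl action.
   Context: For $\pi=a_1\cdots a_n\in\mathfrak{S}_n$: $(2\text{-}31)(\pi)$ is the number of pairs $1\le i<j\le n-1$ with $a_{j+1}<a_i<a_j$, and $(13\text{-}2)(\pi)$ is the number of pairs $2\le i<j\le n$ with $a_{i-1}<a_j<a_i$. Set $a_0=a_{n+1}=n+1$. A letter $a_k$ is a valley if $a_{k-1}>a_k<a_{k+1}$, a peak if $a_{k-1}<a_k>a_{k+1}$, a double ascent if $a_{k-1}<a_k<a_{k+1}$, a double descent if $a_{k-1}>a_k>a_{k+1}$. For $x\in[n]$: if $x$ is a double descent, $\varphi'_x(\pi)$ moves $x$ to between the first pair of consecutive letters $a_i,a_{i+1}$ to the right of $x$ with $a_i<x<a_{i+1}$; if a double ascent, to between the first pair $a_i,a_{i+1}$ to the left of $x$ with $a_i>x>a_{i+1}$; if a peak or valley, $\varphi'_x(\pi)=\pi$. The modified Foata–Strehl action is the $\mathbb{Z}_2^n$-action generated by the commuting involutions $\varphi'_x$, $x\in[n]$. *)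

theory Defs
  imports Main
begin

text \<open>A permutation a_1 ... a_n of [n] is a list of length n (0-based list index k-1 holds a_k).\<close>

definition perms :: "nat \<Rightarrow> nat list set" where
  "perms n = {xs. distinct xs \<and> set xs = {1..n}}"

text \<open>Extended word a_0 a_1 ... a_n a_(n+1) with a_0 = a_(n+1) = n+1; its index k holds a_k.\<close>
definition ext :: "nat list \<Rightarrow> nat list" where
  "ext xs = (length xs + 1) # xs @ [length xs + 1]"

definition letter :: "nat list \<Rightarrow> nat \<Rightarrow> nat" where
  "letter xs k = ext xs ! k"

definition st_2_31 :: "nat list \<Rightarrow> nat" where
  "st_2_31 xs = card {(i, j). 1 \<le> i \<and> i < j \<and> j \<le> length xs - 1 \<and>
      letter xs (j + 1) < letter xs i \<and> letter xs i < letter xs j}"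

definition st_13_2 :: "nat list \<Rightarrow> nat" where
  "st_13_2 xs = card {(i, j). 2 \<le> i \<and> i < j \<and> j \<le> length xs \<and>
      letter xs (i - 1) < letter xs j \<and> letter xs j < letter xs i}"

definition pos :: "nat list \<Rightarrow> nat \<Rightarrow> nat" where
  "pos xs x = (LEAST k. 1 \<le> k \<and> k \<le> length xs \<and> xs ! (k - 1) = x)"

definition double_descent :: "nat list \<Rightarrow> nat \<Rightarrow> bool" where
  "double_descent xs x \<longleftrightarrow> letter xs (pos xs x - 1) > x \<and> x > letter xs (pos xs x + 1)"

definition double_ascent :: "nat list \<Rightarrow> nat \<Rightarrow> bool" where
  "double_ascent xs x \<longleftrightarrow> letter xs (pos xs x - 1) < x \<and> x < letter xs (pos xs x + 1)"

text \<open>For a double descent x = a_p, let i be the least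
  index i > p (i \<le> n) with a_i < x < a_(i+1); x is moved between a_i and a_(i+1).
  For a double ascent, let i be the greatest index i with i + 1 < p and a_i > x > a_(i+1);
  x is moved between a_i and a_(i+1).\<close>
definition phi' :: "nat \<Rightarrow> nat list \<Rightarrow> nat list" where
  "phi' x xs =
    (let p = pos xs x; ys = remove1 x xs in
     if double_descent xs x then
       (let i = Min {i. p < i \<and> i \<le> length xs \<and> letter xs i < x \<and> x < letter xs (i + 1)}
        in take (i - 1) ys @ x # drop (i - 1) ys)
     else if double_ascent xs x then
       (let i = Max {i. i + 1 < p \<and> letter xs i > x \<and> x > letter xs (i + 1)}
        in take i ys @ x # drop i ys)
     else xs)"

text \<open>One generator step of the action on S_n, and the orbit of a permutation: since the
  generators are involutions, the orbit under the generated group is the reflexive-transitive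
  closure of the generator steps.\<close>
definition fs_step :: "nat \<Rightarrow> nat list \<Rightarrow> nat list \<Rightarrow> bool" where
  "fs_step n \<sigma> \<tau> \<longleftrightarrow> (\<exists>x\<in>{1..n}. \<tau> = phi' x \<sigma>)"

definition fs_orbit :: "nat \<Rightarrow> nat list \<Rightarrow> nat list set" where
  "fs_orbit n \<pi> = {\<sigma>. (fs_step n)\<^sup>*\<^sup>* \<pi> \<sigma>}"

end

theory Submission
  imports Defs
begin


fun dc :: "nat \<Rightarrow> nat list \<Rightarrow> nat" where
  "dc y (a # b # r) = (if b < y \<and> y < a then 1 else 0) + dc y (b # r)"
| "dc y _ = 0"

fun cnt :: "nat list \<Rightarrow> nat" where
  "cnt [] = 0"
| "cnt (y # ys) = dc y ys + cnt ys"

lemma dc_snoc: "dc y (u @ [b]) = dc y u + (if u = [] then 0 else (if b < y \<and> y < last u then 1 else 0))"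
  by (induction y u rule: dc.induct) auto

lemma dc_app: "dc y (u @ b # v) = dc y (u @ [b]) + dc y (b # v)"
  by (induction y u rule: dc.induct) auto

lemma move_dc1:
  assumes "u \<noteq> [] \<longrightarrow> last u < x" "\<beta> \<noteq> [] \<longrightarrow> hd \<beta> > x"
  shows "dc y (u @ x # \<beta>) = dc y (u @ \<beta>)"
proof (cases \<beta>)
  case Nil
  then show ?thesis using assms by (auto simp add: dc_snoc)
next
  case (Cons c r)
  then show ?thesis using assms
    by (auto simp add: dc_app[of y u x] dc_app[of y u c] dc_snoc)
qed

lemma dc_small: "\<forall>b\<in>set B. b < x \<Longrightarrow> dc x B = 0"
  by (induction x B rule: dc.induct) auto

lemma dc_x:
  assumes "\<forall>b\<in>set B. b < x" "\<beta> \<noteq> [] \<longrightarrow> hd \<beta> > x"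
  shows "dc x (B @ \<beta>) = dc x \<beta>"
proof (cases \<beta>)
  case Nil
  then show ?thesis using assms dc_small by simp
next
  case (Cons c r)
  have "B \<noteq> [] \<Longrightarrow> last B < x" using assms(1) by simp
  then show ?thesis using assms Cons dc_small[OF assms(1)]
    by (simp add: dc_app[of x B c] dc_snoc)
qed

lemma cnt_shift:
  assumes "\<forall>b\<in>set B. b < x" "\<beta> \<noteq> [] \<longrightarrow> hd \<beta> > x"
  shows "cnt (B @ x # \<beta>) = cnt (B @ \<beta>) + dc x \<beta>"
  using assms
proof (induction B)
  case Nil
  then show ?case by simp
next
  case (Cons b B')
  have "dc b (B' @ x # \<beta>) = dc b (B' @ \<beta>)"
    using Cons.prems by (intro move_dc1) auto
  then show ?case using Cons by simp
qed

lemma dc_move2: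
  assumes "y \<noteq> x" "\<alpha> \<noteq> [] \<longrightarrow> last \<alpha> > x" "\<alpha> = [] \<longrightarrow> y > x"
    "\<forall>b\<in>set B. b < x" "\<beta> \<noteq> [] \<longrightarrow> hd \<beta> > x"
  shows "dc y (\<alpha> @ x # B @ \<beta>) = dc y (\<alpha> @ B @ x # \<beta>)"
proof (cases B)
  case Nil
  then show ?thesis by simp
next
  case (Cons b B')
  have r: "dc y (\<alpha> @ B @ x # \<beta>) = dc y (\<alpha> @ B @ \<beta>)"
    using move_dc1[of "\<alpha> @ B" x \<beta> y] assms Cons by simp
  have l: "dc y (\<alpha> @ x # B @ \<beta>) = dc y (\<alpha> @ [x]) + dc y (x # B @ \<beta>)"
    using dc_app[of y \<alpha> x "B @ \<beta>"] by simp
  have m: "dc y (\<alpha> @ B @ \<beta>) = dc y (\<alpha> @ [b]) + dc y (B @ \<beta>)"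
    using dc_app[of y \<alpha> b "B' @ \<beta>"] Cons by simp
  have bx: "b < x" using assms(4) Cons by simp
  show ?thesis unfolding r l m using assms bx Cons
    by (cases "\<alpha> = []") (auto simp: dc_snoc)
qed

definition cond :: "nat list \<Rightarrow> nat \<Rightarrow> nat list \<Rightarrow> nat list \<Rightarrow> bool" where
  "cond \<alpha> x B \<beta> \<longleftrightarrow> (\<forall>b\<in>set B. b < x) \<and> (\<alpha> \<noteq> [] \<longrightarrow> last \<alpha> > x) \<and>
     (\<beta> \<noteq> [] \<longrightarrow> hd \<beta> > x) \<and> x \<notin> set \<alpha> \<and> x \<notin> set \<beta>"

lemma cnt_move:
  "cond \<alpha> x B \<beta> \<Longrightarrow> cnt (\<alpha> @ x # B @ \<beta>) = cnt (\<alpha> @ B @ x # \<beta>)"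
proof (induction \<alpha>)
  case Nil
  then show ?case using cnt_shift[of B x \<beta>] dc_x[of B x \<beta>] by (simp add: cond_def)
next
  case (Cons a \<alpha>')
  have c': "cond \<alpha>' x B \<beta>" using Cons.prems by (auto simp: cond_def split: if_splits)
  have "dc a (\<alpha>' @ x # B @ \<beta>) = dc a (\<alpha>' @ B @ x # \<beta>)"
    using Cons.prems by (intro dc_move2) (auto simp: cond_def split: if_splits)
  then show ?case using Cons.IH[OF c'] by simp
qed

lemma cond_rev: "cond \<alpha> x B \<beta> \<Longrightarrow> cond (rev \<beta>) x (rev B) (rev \<alpha>)"
  by (auto simp: cond_def last_rev hd_rev)

lemma cnt_rev_move:
  "cond \<alpha> x B \<beta> \<Longrightarrow> cnt (rev (\<alpha> @ x # B @ \<beta>)) = cnt (rev (\<alpha> @ B @ x # \<beta>))"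
  using cnt_move[OF cond_rev] by simp



definition Dset :: "nat \<Rightarrow> nat list \<Rightarrow> nat set" where
  "Dset y ys = {j. Suc j < length ys \<and> ys ! Suc j < y \<and> y < ys ! j}"

definition S2 :: "nat list \<Rightarrow> (nat \<times> nat) set" where
  "S2 xs = {(i, j). i < j \<and> Suc j < length xs \<and> xs ! Suc j < xs ! i \<and> xs ! i < xs ! j}"

lemma Dset_fin: "finite (Dset y ys)"
  by (rule finite_subset[of _ "{..<length ys}"]) (auto simp: Dset_def)

lemma card_Dset: "card (Dset y ys) = dc y ys"
proof (induction y ys rule: dc.induct)
  case (1 y a b r)
  have e: "Dset y (a # b # r) = (if b < y \<and> y < a then {0} else {}) \<union> Suc ` Dset y (b # r)"
  proof (intro equalityI subsetI)
    fix j assume "j \<in> Dset y (a # b # r)"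
    then show "j \<in> (if b < y \<and> y < a then {0} else {}) \<union> Suc ` Dset y (b # r)"
      by (cases j) (auto simp: Dset_def)
  next
    fix j assume "j \<in> (if b < y \<and> y < a then {0} else {}) \<union> Suc ` Dset y (b # r)"
    then show "j \<in> Dset y (a # b # r)"
      by (auto simp: Dset_def split: if_splits)
  qed
  have "0 \<notin> Suc ` Dset y (b # r)" by auto
  then show ?case unfolding e using 1 Dset_fin[of y "b # r"]
    by (simp add: card_image)
next
  case ("2_1" y)
  then show ?case by (simp add: Dset_def)
next
  case ("2_2" y v)
  then show ?case by (simp add: Dset_def)
qed

lemma S2_fin: "finite (S2 xs)"
  by (rule finite_subset[of _ "{..<length xs} \<times> {..<length xs}"]) (auto simp: S2_def)

lemma S2_Cons: "S2 (y # ys) = (\<lambda>j. (0, Suc j)) ` Dset y ys \<union> (\<lambda>(i, j). (Suc i, Suc j)) ` S2 ys"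
proof (intro equalityI subsetI)
  fix p assume "p \<in> S2 (y # ys)"
  then obtain i j where p: "p = (i, j)" "i < j" "Suc j < Suc (length ys)"
    "(y # ys) ! Suc j < (y # ys) ! i" "(y # ys) ! i < (y # ys) ! j"
    by (auto simp: S2_def)
  obtain j' where j: "j = Suc j'" using p(2) by (cases j) auto
  show "p \<in> (\<lambda>j. (0, Suc j)) ` Dset y ys \<union> (\<lambda>(i, j). (Suc i, Suc j)) ` S2 ys"
  proof (cases i)
    case 0
    then show ?thesis using p j by (auto simp: Dset_def)
  next
    case (Suc i')
    then have "(i', j') \<in> S2 ys" using p j by (auto simp: S2_def)
    then show ?thesis using p j Suc by force
  qed
next
  fix p assume "p \<in> (\<lambda>j. (0, Suc j)) ` Dset y ys \<union> (\<lambda>(i, j). (Suc i, Suc j)) ` S2 ys"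
  then show "p \<in> S2 (y # ys)" by (auto simp: S2_def Dset_def)
qed

lemma card_S2: "card (S2 xs) = cnt xs"
proof (induction xs)
  case Nil
  then show ?case by (simp add: S2_def)
next
  case (Cons y ys)
  have d: "(\<lambda>j. (0::nat, Suc j)) ` Dset y ys \<inter> (\<lambda>(i, j). (Suc i, Suc j)) ` S2 ys = {}" by auto
  have i1: "inj_on (\<lambda>j. (0::nat, Suc j)) (Dset y ys)" by (auto simp: inj_on_def)
  have i2: "inj_on (\<lambda>(i, j). (Suc i, Suc j)) (S2 ys)" by (auto simp: inj_on_def)
  show ?case unfolding S2_Cons
    using card_Un_disjoint[OF finite_imageI[OF Dset_fin] finite_imageI[OF S2_fin] d]
      card_image[OF i1] card_image[OF i2] Cons card_Dset by simp
qed

lemma letter_mid: "1 \<le> k \<Longrightarrow> k \<le> length xs \<Longrightarrow> letter xs k = xs ! (k - 1)"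
  by (cases k) (auto simp: letter_def ext_def nth_append)

lemma st231_cnt: "st_2_31 xs = cnt xs"
proof -
  have "{(i, j). 1 \<le> i \<and> i < j \<and> j \<le> length xs - 1 \<and>
      letter xs (j + 1) < letter xs i \<and> letter xs i < letter xs j}
      = (\<lambda>(i, j). (Suc i, Suc j)) ` S2 xs"
  proof (intro equalityI subsetI)
    fix p assume "p \<in> {(i, j). 1 \<le> i \<and> i < j \<and> j \<le> length xs - 1 \<and>
      letter xs (j + 1) < letter xs i \<and> letter xs i < letter xs j}"
    then obtain i j where p: "p = (i, j)" "1 \<le> i" "i < j" "j \<le> length xs - 1"
      "letter xs (j + 1) < letter xs i" "letter xs i < letter xs j" by auto
    have "(i - 1, j - 1) \<in> S2 xs" using p by (auto simp: S2_def letter_mid)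
    moreover have "p = (Suc (i - 1), Suc (j - 1))" using p by auto
    ultimately show "p \<in> (\<lambda>(i, j). (Suc i, Suc j)) ` S2 xs" by force
  next
    fix p assume "p \<in> (\<lambda>(i, j). (Suc i, Suc j)) ` S2 xs"
    then show "p \<in> {(i, j). 1 \<le> i \<and> i < j \<and> j \<le> length xs - 1 \<and>
      letter xs (j + 1) < letter xs i \<and> letter xs i < letter xs j}"
      by (auto simp: S2_def letter_mid)
  qed
  moreover have "inj_on (\<lambda>(i, j). (Suc i, Suc j)) (S2 xs)" by (auto simp: inj_on_def)
  ultimately show ?thesis unfolding st_2_31_def using card_image card_S2 by metis
qed

lemma st132_cnt: "st_13_2 xs = cnt (rev xs)"
proof -
  let ?n = "length xs"
  let ?g = "\<lambda>(a, b). (?n - b, ?n - a)"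
  have "{(i, j). 2 \<le> i \<and> i < j \<and> j \<le> length xs \<and>
      letter xs (i - 1) < letter xs j \<and> letter xs j < letter xs i}
      = ?g ` S2 (rev xs)"
  proof (intro equalityI subsetI)
    fix p assume "p \<in> {(i, j). 2 \<le> i \<and> i < j \<and> j \<le> length xs \<and>
      letter xs (i - 1) < letter xs j \<and> letter xs j < letter xs i}"
    then obtain i j where p: "p = (i, j)" "2 \<le> i" "i < j" "j \<le> ?n"
      "letter xs (i - 1) < letter xs j" "letter xs j < letter xs i" by auto
    have e1: "rev xs ! (?n - j) = xs ! (j - 1)" using p by (simp add: rev_nth)
    have e2: "rev xs ! (?n - i) = xs ! (i - 1)" using p by (simp add: rev_nth)
    have e3: "rev xs ! Suc (?n - i) = xs ! (i - Suc (Suc 0))" using p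
    proof -
      have "?n - Suc (Suc (?n - i)) = i - Suc (Suc 0)" using p by arith
      moreover have "Suc (?n - i) < ?n" using p by arith
      ultimately show ?thesis by (simp add: rev_nth)
    qed
    have h1: "?n - j < ?n - i" "Suc (?n - i) < ?n" using p by arith+
    have l: "letter xs (i - 1) = xs ! (i - Suc (Suc 0))"
      using p letter_mid[of "i - 1" xs] by (simp add: numeral_2_eq_2)
    have "(?n - j, ?n - i) \<in> S2 (rev xs)" using p e1 e2 e3 h1 l
      by (auto simp: S2_def letter_mid)
    moreover have "p = ?g (?n - j, ?n - i)" using p by auto
    ultimately show "p \<in> ?g ` S2 (rev xs)" by blast
  next
    fix p assume "p \<in> ?g ` S2 (rev xs)"
    then obtain a b where p: "p = (?n - b, ?n - a)" "(a, b) \<in> S2 (rev xs)" by auto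
    then show "p \<in> {(i, j). 2 \<le> i \<and> i < j \<and> j \<le> length xs \<and>
      letter xs (i - 1) < letter xs j \<and> letter xs j < letter xs i}"
      by (auto simp: S2_def letter_mid rev_nth Suc_diff_Suc)
  qed
  moreover have "inj_on ?g (S2 (rev xs))" by (auto simp: inj_on_def S2_def)
  ultimately show ?thesis unfolding st_13_2_def using card_image card_S2 by metis
qed



lemma letter_nth: "k < length xs \<Longrightarrow> letter xs (Suc k) = xs ! k"
  by (simp add: letter_def ext_def nth_append)
lemma letter_0: "letter xs 0 = Suc (length xs)"
  by (simp add: letter_def ext_def)
lemma letter_end: "letter xs (Suc (length xs)) = Suc (length xs)"
  by (simp add: letter_def ext_def nth_append)

lemma pos_eq:
  assumes "distinct xs" "xs = \<alpha> @ x # \<gamma>"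
  shows "pos xs x = Suc (length \<alpha>)"
  unfolding pos_def
proof (rule Least_equality)
  show "1 \<le> Suc (length \<alpha>) \<and> Suc (length \<alpha>) \<le> length xs \<and> xs ! (Suc (length \<alpha>) - 1) = x"
    using assms by (simp add: nth_append)
next
  fix k assume k: "1 \<le> k \<and> k \<le> length xs \<and> xs ! (k - 1) = x"
  have "xs ! (k - 1) = xs ! (length \<alpha>)" using k assms by (simp add: nth_append)
  moreover have "k - 1 < length xs" "length \<alpha> < length xs" using k assms by auto
  ultimately have "k - 1 = length \<alpha>" using assms(1) nth_eq_iff_index_eq by blast
  then show "Suc (length \<alpha>) \<le> k" using k by linarith
qed

lemma letter_before:
  assumes "xs = \<alpha> @ x # \<gamma>"
  shows "letter xs (length \<alpha>) = (if \<alpha> = [] then Suc (length xs) else last \<alpha>)"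
proof (cases "\<alpha> = []")
  case True
  then show ?thesis by (simp add: letter_0)
next
  case False
  then have "letter xs (length \<alpha>) = xs ! (length \<alpha> - 1)"
    using letter_nth[of "length \<alpha> - 1" xs] assms by simp
  then show ?thesis using False assms by (simp add: nth_append last_conv_nth)
qed

lemma letter_after:
  assumes "xs = \<alpha> @ x # \<gamma>"
  shows "letter xs (Suc (Suc (length \<alpha>))) = (if \<gamma> = [] then Suc (length xs) else hd \<gamma>)"
proof (cases "\<gamma> = []")
  case True
  then show ?thesis using assms letter_end[of xs] by simp
next
  case False
  then have "letter xs (Suc (Suc (length \<alpha>))) = xs ! (Suc (length \<alpha>))"
    using letter_nth[of "Suc (length \<alpha>)" xs] assms by simp
  then show ?thesis using False assms by (simp add: nth_append hd_conv_nth)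
qed

lemma phi_cases:
  assumes "xs \<in> perms n" "x \<in> {1..n}"
  shows "phi' x xs = xs \<or> (\<exists>\<alpha> B \<beta>. cond \<alpha> x B \<beta> \<and>
     ((xs = \<alpha> @ x # B @ \<beta> \<and> phi' x xs = \<alpha> @ B @ x # \<beta>) \<or>
      (xs = \<alpha> @ B @ x # \<beta> \<and> phi' x xs = \<alpha> @ x # B @ \<beta>)))"
proof -
  have d: "distinct xs" and s: "set xs = {1..n}" using assms(1) by (auto simp: perms_def)
  have len: "length xs = n" using distinct_card[OF d] s by simp
  have xin: "x \<in> set xs" using assms s by simp
  obtain \<alpha> \<gamma> where xs: "xs = \<alpha> @ x # \<gamma>" using split_list[OF xin] by blast
  have xa: "x \<notin> set \<alpha>" and xg: "x \<notin> set \<gamma>" using d xs by auto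
  have xlt: "x < Suc (length xs)" using assms len by simp
  have p: "pos xs x = Suc (length \<alpha>)" using pos_eq[OF d xs] .
  have lb: "letter xs (pos xs x - 1) = (if \<alpha> = [] then Suc (length xs) else last \<alpha>)"
    using p letter_before[OF xs] by simp
  have la: "letter xs (pos xs x + 1) = (if \<gamma> = [] then Suc (length xs) else hd \<gamma>)"
    using p letter_after[OF xs] by simp
  have ys: "remove1 x xs = \<alpha> @ \<gamma>" using xs xa by (simp add: remove1_append)
  show ?thesis
  proof (cases "double_descent xs x")
    case dd: True
    then have g: "\<gamma> \<noteq> []" "hd \<gamma> < x" and a: "\<alpha> \<noteq> [] \<longrightarrow> last \<alpha> > x"
      using lb la xlt unfolding double_descent_def by (auto split: if_splits)
    define B where "B = takeWhile (\<lambda>y. y < x) \<gamma>"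
    define \<beta> where "\<beta> = dropWhile (\<lambda>y. y < x) \<gamma>"
    have gB: "\<gamma> = B @ \<beta>" unfolding B_def \<beta>_def by simp
    have Bne: "B \<noteq> []" using g unfolding B_def by (cases \<gamma>) auto
    have Blt: "\<forall>b\<in>set B. b < x" unfolding B_def by (auto dest: set_takeWhileD)
    have hb: "\<beta> \<noteq> [] \<longrightarrow> hd \<beta> > x"
    proof
      assume ne: "\<beta> \<noteq> []"
      have "\<not> hd \<beta> < x" using hd_dropWhile[of "\<lambda>y. y < x" \<gamma>] ne unfolding \<beta>_def by simp
      moreover have "hd \<beta> \<in> set \<gamma>" using ne gB by simp
      ultimately show "hd \<beta> > x" using xg by (cases "hd \<beta> = x") auto
    qed
    have c: "cond \<alpha> x B \<beta>" using Blt a hb xa xg gB by (auto simp: cond_def)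
    have xs2: "xs = \<alpha> @ x # B @ \<beta>" using xs gB by simp
    let ?m = "length B"
    let ?la = "length \<alpha>"
    define S where "S = {i. pos xs x < i \<and> i \<le> length xs \<and> letter xs i < x \<and> x < letter xs (i + 1)}"
    have LB: "letter xs (Suc (Suc (?la + k))) = B ! k" if "k < ?m" for k
    proof -
      have "letter xs (Suc (Suc (?la + k))) = xs ! (Suc (?la + k))"
        using letter_nth[of "Suc (?la + k)" xs] that xs2 by simp
      then show ?thesis using xs2 that by (simp add: nth_append)
    qed
    have LBm: "letter xs (Suc (Suc (?la + ?m))) = (if \<beta> = [] then Suc (length xs) else hd \<beta>)"
    proof (cases "\<beta> = []")
      case True
      then show ?thesis using xs2 letter_end[of xs] by simp
    next
      case False
      then have "letter xs (Suc (Suc (?la + ?m))) = xs ! (Suc (?la + ?m))"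
        using letter_nth[of "Suc (?la + ?m)" xs] xs2 by simp
      then show ?thesis using False xs2 by (simp add: nth_append hd_conv_nth)
    qed
    have i0S: "Suc ?la + ?m \<in> S"
    proof -
      have "letter xs (Suc ?la + ?m) = B ! (?m - 1)"
        using LB[of "?m - 1"] Bne by (cases ?m) auto
      moreover have "B ! (?m - 1) < x" using Blt Bne by simp
      moreover have "x < letter xs (Suc ?la + ?m + 1)" using LBm hb xlt by simp
      moreover have "Suc ?la + ?m \<le> length xs" using xs2 by simp
      ultimately show ?thesis using p Bne unfolding S_def by simp
    qed
    have minS: "Suc ?la + ?m \<le> i" if "i \<in> S" for i
    proof (rule ccontr)
      assume "\<not> Suc ?la + ?m \<le> i"
      moreover have "Suc ?la < i" "x < letter xs (i + 1)" using that p unfolding S_def by auto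
      moreover obtain kk where kk: "kk = i - Suc ?la" by simp
      ultimately have k: "i + 1 = Suc (Suc (?la + kk))" "kk < ?m" by arith+
      then have "letter xs (i + 1) = B ! kk" using LB by simp
      moreover have "B ! kk \<in> set B" using k(2) by (rule nth_mem)
      ultimately show False using Blt \<open>x < letter xs (i + 1)\<close> by fastforce
    qed
    have fin: "finite S" by (rule finite_subset[of _ "{..length xs}"]) (auto simp: S_def)
    have mS: "Min S = Suc ?la + ?m" using Min_eqI[OF fin minS i0S] .
    have res: "phi' x xs = \<alpha> @ B @ x # \<beta>"
      using dd mS unfolding phi'_def Let_def S_def[symmetric] ys gB by simp
    show ?thesis using c xs2 res by blast
  next
    case nd: False
    show ?thesis
    proof (cases "double_ascent xs x")
      case da: True
      then have a: "\<alpha> \<noteq> []" "last \<alpha> < x" and g: "\<gamma> \<noteq> [] \<longrightarrow> hd \<gamma> > x"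
        using lb la xlt unfolding double_ascent_def by (auto split: if_splits)
      define B where "B = rev (takeWhile (\<lambda>y. y < x) (rev \<alpha>))"
      define \<alpha>0 where "\<alpha>0 = rev (dropWhile (\<lambda>y. y < x) (rev \<alpha>))"
      have aB: "\<alpha> = \<alpha>0 @ B" unfolding B_def \<alpha>0_def
        by (metis rev_append rev_rev_ident takeWhile_dropWhile_id)
      have Bne: "B \<noteq> []" using a unfolding B_def
        by (cases "rev \<alpha>") (auto simp: hd_rev[symmetric])
      have Blt: "\<forall>b\<in>set B. b < x" unfolding B_def by (auto dest: set_takeWhileD)
      have ha: "\<alpha>0 \<noteq> [] \<longrightarrow> last \<alpha>0 > x"
      proof
        assume ne: "\<alpha>0 \<noteq> []"
        have ne': "dropWhile (\<lambda>y. y < x) (rev \<alpha>) \<noteq> []" using ne unfolding \<alpha>0_def by simp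
        have "last \<alpha>0 = hd (dropWhile (\<lambda>y. y < x) (rev \<alpha>))"
          unfolding \<alpha>0_def using ne' by (simp add: last_rev)
        then have "\<not> last \<alpha>0 < x" using hd_dropWhile[OF ne'] by simp
        moreover have "last \<alpha>0 \<in> set \<alpha>" using ne aB by simp
        ultimately show "last \<alpha>0 > x" using xa by (cases "last \<alpha>0 = x") auto
      qed
      have c: "cond \<alpha>0 x B \<gamma>" using Blt ha g xa xg aB by (auto simp: cond_def)
      have xs2: "xs = \<alpha>0 @ B @ x # \<gamma>" using xs aB by simp
      let ?m = "length B"
      let ?l0 = "length \<alpha>0"
      define S where "S = {i. i + 1 < pos xs x \<and> letter xs i > x \<and> x > letter xs (i + 1)}"
      have LB: "letter xs (Suc (?l0 + k)) = B ! k" if "k < ?m" for k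
      proof -
        have "letter xs (Suc (?l0 + k)) = xs ! (?l0 + k)"
          using letter_nth[of "?l0 + k" xs] that xs2 by simp
        then show ?thesis using xs2 that by (simp add: nth_append)
      qed
      have L0: "letter xs ?l0 = (if \<alpha>0 = [] then Suc (length xs) else last \<alpha>0)"
        using letter_before[of xs \<alpha>0 "hd B" "tl B @ x # \<gamma>"] xs2 Bne by simp
      have pp: "pos xs x = Suc (?l0 + ?m)" using p aB by simp
      have i0S: "?l0 \<in> S"
      proof -
        have "letter xs (?l0 + 1) = B ! 0" using LB[of 0] Bne by simp
        moreover have "B ! 0 < x" using Blt Bne by simp
        moreover have "x < letter xs ?l0" using L0 ha xlt by simp
        ultimately show ?thesis using pp Bne unfolding S_def by simp
      qed
      have maxS: "i \<le> ?l0" if "i \<in> S" for i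
      proof (rule ccontr)
        assume "\<not> i \<le> ?l0"
        moreover have "i + 1 < Suc (?l0 + ?m)" "x < letter xs i" using that pp unfolding S_def by auto
        moreover obtain kk where kk: "kk = i - Suc ?l0" by simp
        ultimately have k: "i = Suc (?l0 + kk)" "kk < ?m" by arith+
        then have "letter xs i = B ! kk" using LB by simp
        moreover have "B ! kk \<in> set B" using k(2) by (rule nth_mem)
        ultimately show False using Blt \<open>x < letter xs i\<close> by fastforce
      qed
      have fin: "finite S" by (rule finite_subset[of _ "{..pos xs x}"]) (auto simp: S_def)
      have mS: "Max S = ?l0" using Max_eqI[OF fin maxS i0S] .
      have res: "phi' x xs = \<alpha>0 @ x # B @ \<gamma>"
        using nd da mS unfolding phi'_def Let_def S_def[symmetric] ys aB by simp
      show ?thesis using c xs2 res by blast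
    next
      case False
      then show ?thesis using nd unfolding phi'_def Let_def by simp
    qed
  qed
qed

lemma step_inv:
  assumes "\<sigma> \<in> perms n" "x \<in> {1..n}"
  shows "phi' x \<sigma> \<in> perms n \<and> st_2_31 (phi' x \<sigma>) = st_2_31 \<sigma> \<and> st_13_2 (phi' x \<sigma>) = st_13_2 \<sigma>"
  using phi_cases[OF assms]
proof
  assume "phi' x \<sigma> = \<sigma>"
  then show ?thesis using assms by simp
next
  assume "\<exists>\<alpha> B \<beta>. cond \<alpha> x B \<beta> \<and>
     ((\<sigma> = \<alpha> @ x # B @ \<beta> \<and> phi' x \<sigma> = \<alpha> @ B @ x # \<beta>) \<or>
      (\<sigma> = \<alpha> @ B @ x # \<beta> \<and> phi' x \<sigma> = \<alpha> @ x # B @ \<beta>))"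
  then obtain \<alpha> B \<beta> where c: "cond \<alpha> x B \<beta>" and
    h: "(\<sigma> = \<alpha> @ x # B @ \<beta> \<and> phi' x \<sigma> = \<alpha> @ B @ x # \<beta>) \<or>
      (\<sigma> = \<alpha> @ B @ x # \<beta> \<and> phi' x \<sigma> = \<alpha> @ x # B @ \<beta>)" by blast
  have e1: "cnt (\<alpha> @ x # B @ \<beta>) = cnt (\<alpha> @ B @ x # \<beta>)" using cnt_move[OF c] .
  have e2: "cnt (rev (\<alpha> @ x # B @ \<beta>)) = cnt (rev (\<alpha> @ B @ x # \<beta>))" using cnt_rev_move[OF c] .
  have pm: "phi' x \<sigma> \<in> perms n" using h assms(1) by (auto simp: perms_def)
  show ?thesis using h e1 e2 pm by (auto simp: st231_cnt st132_cnt)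
qed

theorem theorem5p1:
  fixes n :: nat and \<pi> \<sigma> :: "nat list"
  assumes "\<pi> \<in> perms n" and "\<sigma> \<in> fs_orbit n \<pi>"
  shows "st_2_31 \<sigma> = st_2_31 \<pi> \<and> st_13_2 \<sigma> = st_13_2 \<pi>"
proof -
  have r: "(fs_step n)\<^sup>*\<^sup>* \<pi> \<sigma>" using assms(2) by (simp add: fs_orbit_def)
  have "\<sigma> \<in> perms n \<and> st_2_31 \<sigma> = st_2_31 \<pi> \<and> st_13_2 \<sigma> = st_13_2 \<pi>"
    using r
  proof (induction rule: rtranclp_induct)
    case base
    then show ?case using assms(1) by simp
  next
    case (step y z)
    then obtain x where x: "x \<in> {1..n}" "z = phi' x y" by (auto simp: fs_step_def)
    then show ?case using step_inv[of y n x] step.IH by simp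
  qed
  then show ?thesis by simp
qed

end
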